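(* Let $G=(V,E)$ be a finite simple graph on $n$ vertices and $C\subseteq V$ such that no vertex of $V\setminus C$ is isolated in $G$. Let $t,k$ be positive integers with $t\le k$, and let $S=(v_1,\dots,v_t)$ and $S'=(v_1,\dots,v_t,v_{t+1},\dots,v_k)$ be legal sequences of $G;C$. Then $$k\le n-\Big|\bigcup_{i=1}^t N\langle v_i\rangle\Big| + t.$$
   Context: $N\langle v\rangle = N[v]$ (closed neighborhood) if $v\in C$ and $N\langle v\rangle=N(v)$ (open neighborhood) if $v\notin C$. A sequence $(v_1,\dots,v_k)$ of distinct vertices is a legal sequence of $G;C$ if $N\langle v_i\rangle\setminus\bigcup_{j=1}^{i-1}N\langle v_j\rangle\neq\emptyset$ for all $i=2,\dots,k$. *)

theory Defs
  imports Main
begin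

definition simple_graph :: "'a set \<Rightarrow> ('a \<Rightarrow> 'a \<Rightarrow> bool) \<Rightarrow> bool" where
  "simple_graph V E \<longleftrightarrow> finite V \<and> (\<forall>u v. E u v \<longrightarrow> u \<in> V \<and> v \<in> V)
     \<and> (\<forall>u v. E u v \<longrightarrow> E v u) \<and> (\<forall>v. \<not> E v v)"

definition open_nbhd :: "'a set \<Rightarrow> ('a \<Rightarrow> 'a \<Rightarrow> bool) \<Rightarrow> 'a \<Rightarrow> 'a set" where
  "open_nbhd V E v = {u \<in> V. E v u}"

definition closed_nbhd :: "'a set \<Rightarrow> ('a \<Rightarrow> 'a \<Rightarrow> bool) \<Rightarrow> 'a \<Rightarrow> 'a set" where
  "closed_nbhd V E v = insert v (open_nbhd V E v)"

definition nbhdC :: "'a set \<Rightarrow> ('a \<Rightarrow> 'a \<Rightarrow> bool) \<Rightarrow> 'a set \<Rightarrow> 'a \<Rightarrow> 'a set" where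
  "nbhdC V E C v = (if v \<in> C then closed_nbhd V E v else open_nbhd V E v)"

definition legal_seq :: "'a set \<Rightarrow> ('a \<Rightarrow> 'a \<Rightarrow> bool) \<Rightarrow> 'a set \<Rightarrow> 'a list \<Rightarrow> bool" where
  "legal_seq V E C s \<longleftrightarrow> distinct s \<and> set s \<subseteq> V \<and>
     (\<forall>i. 1 \<le> i \<and> i < length s \<longrightarrow>
        nbhdC V E C (s ! i) - (\<Union>j<i. nbhdC V E C (s ! j)) \<noteq> {})"

end

theory Submission
  imports Defs
begin

theorem proposition2:
  fixes V :: "'a set" and E :: "'a \<Rightarrow> 'a \<Rightarrow> bool" and C :: "'a set"
    and S S' :: "'a list" and t k :: nat
  assumes "simple_graph V E"
    and "C \<subseteq> V"
    and "\<forall>v \<in> V - C. \<exists>u. E v u"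
    and "0 < t" and "t \<le> k"
    and "length S = t" and "length S' = k" and "take t S' = S"
    and "legal_seq V E C S" and "legal_seq V E C S'"
  shows "k \<le> card V - card (\<Union>i<t. nbhdC V E C (S ! i)) + t"
proof -
  define U where "U i = (\<Union>j<i. nbhdC V E C (S' ! j))" for i
  have fin: "finite V" using assms(1) simple_graph_def by blast
  have sub: "U i \<subseteq> V" if "i \<le> k" for i
  proof -
    have *: "nbhdC V E C (S' ! j) \<subseteq> V" if "j < k" for j
    proof -
      have "S' ! j \<in> V" using assms(7,10) that nth_mem unfolding legal_seq_def by (metis subsetD)
      thus ?thesis unfolding nbhdC_def closed_nbhd_def open_nbhd_def by auto
    qed
    show ?thesis unfolding U_def proof (intro UN_least)
      fix j assume "j \<in> {..<i}"
      then have "j < k" using that by simp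
      then show "nbhdC V E C (S' ! j) \<subseteq> V" using * by blast
    qed
  qed
  have step: "card (U (Suc i)) \<ge> card (U i) + 1" if "t \<le> i" "i < k" for i
  proof -
    have "U (Suc i) = U i \<union> nbhdC V E C (S' ! i)" unfolding U_def
      by (auto simp: lessThan_Suc)
    moreover have "nbhdC V E C (S' ! i) - U i \<noteq> {}"
    proof -
      have L: "\<forall>i. 1 \<le> i \<and> i < k \<longrightarrow> nbhdC V E C (S' ! i) - (\<Union>j<i. nbhdC V E C (S' ! j)) \<noteq> {}"
        using assms(10,7) unfolding legal_seq_def by simp
      have "1 \<le> i" using that assms(4) by simp
      then show ?thesis using L that(2) unfolding U_def by blast
    qed
    ultimately have ps: "U i \<subset> U (Suc i)" by blast
    have fs: "finite (U (Suc i))" using sub[of "Suc i"] that fin finite_subset by auto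
    have "card (U i) < card (U (Suc i))" by (rule psubset_card_mono[OF fs ps])
    then show ?thesis by simp
  qed
  have ind: "card (U (t+m)) \<ge> card (U t) + m" if "t + m \<le> k" for m
    using that
  proof (induction m)
    case 0 then show ?case by simp
  next
    case (Suc m)
    then have "card (U (Suc (t+m))) \<ge> card (U (t+m)) + 1" using step[of "t+m"] by simp
    moreover have "card (U t) + m \<le> card (U (t+m))" using Suc.IH Suc.prems by simp
    ultimately show ?case by simp
  qed
  have Ut: "U t = (\<Union>i<t. nbhdC V E C (S ! i))"
  proof -
    have "S ! j = S' ! j" if "j < t" for j using assms(8) that by (metis nth_take)
    then show ?thesis unfolding U_def by simp
  qed
  have "card (U k) \<ge> card (U t) + (k - t)" using ind[of "k-t"] assms(5) by simp
  moreover have "card (U k) \<le> card V" using sub[of k] fin card_mono by auto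
  ultimately show ?thesis unfolding Ut[symmetric] by linarith
qed

end
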